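(* Let $\gamma>0$, $\tau>1$, $\alpha\in D_{\gamma,\tau}$, and let $p_n/q_n$ be the convergents of $\alpha$. For even $n$ put $I_n:=\left(\frac{p_n}{q_n},\frac{p_{n+2}}{q_{n+2}}\right)$. Suppose there is $N\in\mathbb{N}$ such that for every even $n>N$, $$\frac{p_n}{q_n}+\frac{\gamma}{q_n^{\tau+1}}<\frac{p_{n+2}}{q_{n+2}}-\frac{\gamma}{q_{n+2}^{\tau+1}},$$ and for even $n>N$ define $A_n:=\left(\frac{p_n}{q_n}+\frac{\gamma}{q_n^{\tau+1}},\ \frac{p_{n+2}}{q_{n+2}}-\frac{\gamma}{q_{n+2}^{\tau+1}}\right)$. Suppose moreover that for every even $n$, $$\alpha-\frac{p_n}{q_n}>\frac{\gamma}{q_n^{\tau+1}}.$$ Then there exists $N_1\in\mathbb{N}$ such that for every even $n>N_1$ and every rational $p/q$ ($p\in\mathbb{Z},q\in\mathbb{N}$): if $p/q\notin I_n$, then $\frac{p}{q}+\frac{\gamma}{q^{\tau+1}}\notin A_n$ and $\frac{p}{q}-\frac{\gamma}{q^{\tau+1}}\notin A_n$.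
   Context: For $x\in\mathbb{R}$, $\|x\|:=\min_{p\in\mathbb{Z}}|x-p|$; $\mathbb{N}=\{1,2,\dots\}$. For $\gamma>0,\tau\ge1$, $D_{\gamma,\tau}:=\{\alpha\in(0,1): \|q\alpha\|\ge\gamma/q^\tau\ \forall q\in\mathbb{N}\}$; its elements are irrational. For irrational $\alpha\in(0,1)$ write $\alpha=\cfrac{1}{a_1+\cfrac{1}{a_2+\cdots}}$ (so $a_0=0$), and let $p_n/q_n$ ($n\ge0$) be its convergents: $p_{-1}=1,q_{-1}=0,p_0=0,q_0=1$, $p_n=a_np_{n-1}+p_{n-2}$, $q_n=a_nq_{n-1}+q_{n-2}$. Even-indexed convergents lie below $\alpha$. *)

theory Defs
  imports Complex_Main
begin

definition dist_int :: "real \<Rightarrow> real" where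
  "dist_int x = \<bar>x - round x\<bar>"

definition Dioph :: "real \<Rightarrow> real \<Rightarrow> real set" where
  "Dioph \<gamma> \<tau> = {\<alpha>. 0 < \<alpha> \<and> \<alpha> < 1 \<and>
      (\<forall>q::nat. q \<ge> 1 \<longrightarrow> dist_int (real q * \<alpha>) \<ge> \<gamma> / real q powr \<tau>)}"

fun cf_rem :: "real \<Rightarrow> nat \<Rightarrow> real" where
  "cf_rem \<alpha> 0 = \<alpha>"
| "cf_rem \<alpha> (Suc n) = frac (1 / cf_rem \<alpha> n)"

text \<open>Partial quotients a_n (n >= 1); a_0 = 0 for alpha in (0,1).\<close>
definition cf_a :: "real \<Rightarrow> nat \<Rightarrow> int" where
  "cf_a \<alpha> n = (if n = 0 then 0 else \<lfloor>1 / cf_rem \<alpha> (n - 1)\<rfloor>)"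

text \<open>Convergent numerators/denominators with p_{-1}=1, q_{-1}=0, p_0=0, q_0=1.\<close>
fun cf_p :: "real \<Rightarrow> nat \<Rightarrow> int" where
  "cf_p \<alpha> 0 = 0"
| "cf_p \<alpha> (Suc 0) = cf_a \<alpha> 1 * 0 + 1"
| "cf_p \<alpha> (Suc (Suc n)) = cf_a \<alpha> (n + 2) * cf_p \<alpha> (Suc n) + cf_p \<alpha> n"

fun cf_q :: "real \<Rightarrow> nat \<Rightarrow> int" where
  "cf_q \<alpha> 0 = 1"
| "cf_q \<alpha> (Suc 0) = cf_a \<alpha> 1 * 1 + 0"
| "cf_q \<alpha> (Suc (Suc n)) = cf_a \<alpha> (n + 2) * cf_q \<alpha> (Suc n) + cf_q \<alpha> n"

definition conv :: "real \<Rightarrow> nat \<Rightarrow> real" where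
  "conv \<alpha> n = real_of_int (cf_p \<alpha> n) / real_of_int (cf_q \<alpha> n)"

end

theory Submission
  imports Defs
begin

lemma rem_props:
  assumes "\<alpha> \<notin> \<rat>" "0 < \<alpha>" "\<alpha> < 1"
  shows "0 < cf_rem \<alpha> n \<and> cf_rem \<alpha> n < 1 \<and> cf_rem \<alpha> n \<notin> \<rat>"
proof (induction n)
  case 0 then show ?case using assms by simp
next
  case (Suc n)
  let ?y = "1 / cf_rem \<alpha> n"
  have ny: "?y \<notin> \<rat>"
  proof
    assume "?y \<in> \<rat>"
    then have "1 / ?y \<in> \<rat>" by (rule Rats_divide[OF Rats_1])
    then show False using Suc by simp
  qed
  have fr: "frac ?y \<notin> \<rat>"
  proof
    assume "frac ?y \<in> \<rat>"
    then have "frac ?y + of_int \<lfloor>?y\<rfloor> \<in> \<rat>" by (simp add: Rats_add)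
    moreover have "frac ?y + of_int \<lfloor>?y\<rfloor> = ?y" by (simp add: frac_def)
    ultimately show False using ny by metis
  qed
  then have "frac ?y \<noteq> 0" by (metis Rats_0)
  moreover have "frac ?y \<ge> 0" "frac ?y < 1" by (auto simp: frac_lt_1)
  ultimately show ?case using fr by simp
qed

lemma rem_recip:
  "1 / cf_rem \<alpha> n = of_int (cf_a \<alpha> (Suc n)) + cf_rem \<alpha> (Suc n)"
  by (simp add: cf_a_def frac_def)

lemma a_pos:
  assumes "\<alpha> \<notin> \<rat>" "0 < \<alpha>" "\<alpha> < 1"
  shows "cf_a \<alpha> (Suc n) \<ge> 1"
proof -
  have "0 < cf_rem \<alpha> n" "cf_rem \<alpha> n < 1" using rem_props[OF assms] by auto
  then have "1 / cf_rem \<alpha> n \<ge> 1" by simp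
  then show ?thesis by (simp add: cf_a_def)
qed

lemma det:
  "cf_p \<alpha> (Suc k) * cf_q \<alpha> k - cf_p \<alpha> k * cf_q \<alpha> (Suc k) = (-1)^k"
proof (induction k)
  case 0 then show ?case by simp
next
  case (Suc k)
  have "cf_p \<alpha> (Suc (Suc k)) * cf_q \<alpha> (Suc k) - cf_p \<alpha> (Suc k) * cf_q \<alpha> (Suc (Suc k))
     = - (cf_p \<alpha> (Suc k) * cf_q \<alpha> k - cf_p \<alpha> k * cf_q \<alpha> (Suc k))"
    by (simp add: algebra_simps)
  then show ?case using Suc by simp
qed

lemma q_mono:
  assumes "\<alpha> \<notin> \<rat>" "0 < \<alpha>" "\<alpha> < 1"
  shows "1 \<le> cf_q \<alpha> n \<and> cf_q \<alpha> n \<le> cf_q \<alpha> (Suc n)"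
proof (induction n)
  case 0 then show ?case using a_pos[OF assms, of 0] by simp
next
  case (Suc n)
  have "cf_a \<alpha> (n+2) \<ge> 1" using a_pos[OF assms, of "Suc n"] by simp
  then have "cf_a \<alpha> (n+2) * cf_q \<alpha> (Suc n) \<ge> cf_q \<alpha> (Suc n)"
    using Suc by (simp add: mult_le_cancel_right1)
  moreover have "cf_q \<alpha> (Suc (Suc n)) = cf_a \<alpha> (n+2) * cf_q \<alpha> (Suc n) + cf_q \<alpha> n" by simp
  ultimately show ?case using Suc by linarith
qed

lemma q_ge:
  assumes "\<alpha> \<notin> \<rat>" "0 < \<alpha>" "\<alpha> < 1"
  shows "int n \<le> cf_q \<alpha> n \<and> int (Suc n) \<le> cf_q \<alpha> (Suc n)"
proof (induction n)
  case 0 then show ?case using a_pos[OF assms, of 0] by simp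
next
  case (Suc n)
  have "cf_a \<alpha> (n+2) \<ge> 1" using a_pos[OF assms, of "Suc n"] by simp
  then have "cf_a \<alpha> (n+2) * cf_q \<alpha> (Suc n) \<ge> cf_q \<alpha> (Suc n)"
    using q_mono[OF assms, of "Suc n"] by (simp add: mult_le_cancel_right1)
  moreover have "cf_q \<alpha> (Suc (Suc n)) = cf_a \<alpha> (n+2) * cf_q \<alpha> (Suc n) + cf_q \<alpha> n" by simp
  ultimately show ?case using Suc q_mono[OF assms, of n] by linarith
qed

lemma formula:
  assumes "\<alpha> \<notin> \<rat>" "0 < \<alpha>" "\<alpha> < 1"
  shows "\<alpha> * (of_int (cf_q \<alpha> (Suc m)) + of_int (cf_q \<alpha> m) * cf_rem \<alpha> (Suc m))
       = of_int (cf_p \<alpha> (Suc m)) + of_int (cf_p \<alpha> m) * cf_rem \<alpha> (Suc m)"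
proof (induction m)
  case 0
  have "1 / \<alpha> = of_int (cf_a \<alpha> 1) + cf_rem \<alpha> 1" using rem_recip[of \<alpha> 0] by simp
  then have "\<alpha> * (of_int (cf_a \<alpha> 1) + cf_rem \<alpha> 1) = 1" using assms by (simp add: field_simps)
  then show ?case by simp
next
  case (Suc m)
  define r where "r = cf_rem \<alpha> (Suc m)"
  define r' where "r' = cf_rem \<alpha> (Suc (Suc m))"
  define a where "a = (of_int (cf_a \<alpha> (m+2)) :: real)"
  have "1 / r = a + r'" unfolding r_def r'_def a_def using rem_recip[of \<alpha> "Suc m"] by simp
  moreover have "r > 0" unfolding r_def using rem_props[OF assms] by blast
  ultimately have ra: "r * (a + r') = 1" by (simp add: field_simps)
  have IH: "\<alpha> * (of_int (cf_q \<alpha> (Suc m)) + of_int (cf_q \<alpha> m) * r)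
       = of_int (cf_p \<alpha> (Suc m)) + of_int (cf_p \<alpha> m) * r" using Suc unfolding r_def .
  have "\<alpha> * (of_int (cf_q \<alpha> (Suc m)) * (a + r') + of_int (cf_q \<alpha> m) * (r * (a + r')))
       = of_int (cf_p \<alpha> (Suc m)) * (a + r') + of_int (cf_p \<alpha> m) * (r * (a + r'))"
    using arg_cong[OF IH, of "\<lambda>z. z * (a + r')"] by (simp add: algebra_simps)
  then have "\<alpha> * (of_int (cf_q \<alpha> (Suc m)) * (a + r') + of_int (cf_q \<alpha> m))
       = of_int (cf_p \<alpha> (Suc m)) * (a + r') + of_int (cf_p \<alpha> m)" using ra by simp
  then show ?case unfolding r'_def[symmetric] by (simp add: a_def algebra_simps)
qed

lemma q_pos:
  assumes "\<alpha> \<notin> \<rat>" "0 < \<alpha>" "\<alpha> < 1"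
  shows "0 < cf_q \<alpha> n"
  using q_mono[OF assms, of n] by linarith

lemma diff_formula:
  assumes "\<alpha> \<notin> \<rat>" "0 < \<alpha>" "\<alpha> < 1"
  shows "(\<alpha> - conv \<alpha> (Suc m)) * (of_int (cf_q \<alpha> (Suc m)) * (of_int (cf_q \<alpha> (Suc m)) + of_int (cf_q \<alpha> m) * cf_rem \<alpha> (Suc m)))
     = - ((-1)^m) * cf_rem \<alpha> (Suc m)"
proof -
  define r where "r = cf_rem \<alpha> (Suc m)"
  define Q1 where "Q1 = (of_int (cf_q \<alpha> (Suc m)) :: real)"
  define Q0 where "Q0 = (of_int (cf_q \<alpha> m) :: real)"
  define P1 where "P1 = (of_int (cf_p \<alpha> (Suc m)) :: real)"
  define P0 where "P0 = (of_int (cf_p \<alpha> m) :: real)"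
  have F: "\<alpha> * (Q1 + Q0 * r) = P1 + P0 * r" using formula[OF assms, of m]
    unfolding r_def Q1_def Q0_def P1_def P0_def by simp
  have D: "P1 * Q0 - P0 * Q1 = (-1)^m" unfolding P1_def Q0_def P0_def Q1_def
    using arg_cong[OF det[of \<alpha> m], of real_of_int] by simp
  have Q1p: "Q1 > 0" unfolding Q1_def using q_pos[OF assms] by simp
  have c: "conv \<alpha> (Suc m) = P1 / Q1" unfolding conv_def P1_def Q1_def by simp
  have "(\<alpha> - P1 / Q1) * (Q1 * (Q1 + Q0 * r)) = \<alpha> * (Q1 + Q0 * r) * Q1 - P1 * (Q1 + Q0 * r)"
    using Q1p by (simp add: field_simps)
  also have "\<dots> = (P1 + P0 * r) * Q1 - P1 * (Q1 + Q0 * r)" using F by simp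
  also have "\<dots> = - (P1 * Q0 - P0 * Q1) * r" by (simp add: algebra_simps)
  finally show ?thesis using D c unfolding r_def Q1_def Q0_def by simp
qed

lemma odd_above:
  assumes "\<alpha> \<notin> \<rat>" "0 < \<alpha>" "\<alpha> < 1" "odd n"
  shows "\<alpha> < conv \<alpha> n"
proof -
  obtain m where n: "n = Suc m" and m: "even m" using assms(4) by (cases n) auto
  have r: "0 < cf_rem \<alpha> (Suc m)" using rem_props[OF assms(1-3)] by blast
  have "0 < (of_int (cf_q \<alpha> (Suc m)) * (of_int (cf_q \<alpha> (Suc m)) + of_int (cf_q \<alpha> m) * cf_rem \<alpha> (Suc m)) :: real)"
    using q_pos[OF assms(1-3)] r by (simp add: add_pos_pos)
  moreover have "(\<alpha> - conv \<alpha> (Suc m)) * (of_int (cf_q \<alpha> (Suc m)) * (of_int (cf_q \<alpha> (Suc m)) + of_int (cf_q \<alpha> m) * cf_rem \<alpha> (Suc m))) < 0"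
    using diff_formula[OF assms(1-3), of m] m r by simp
  ultimately have "\<alpha> - conv \<alpha> (Suc m) < 0" by (metis mult_less_0_iff not_less_iff_gr_or_eq)
  then show ?thesis unfolding n by simp
qed

lemma even_close:
  assumes "\<alpha> \<notin> \<rat>" "0 < \<alpha>" "\<alpha> < 1" "even n" "n \<ge> 1"
  shows "\<alpha> - conv \<alpha> n \<le> 1 / real n"
proof -
  obtain m where n: "n = Suc m" and m: "odd m" using assms(4,5) by (cases n) auto
  define r where "r = cf_rem \<alpha> (Suc m)"
  define Q1 where "Q1 = (of_int (cf_q \<alpha> (Suc m)) :: real)"
  define Q0 where "Q0 = (of_int (cf_q \<alpha> m) :: real)"
  have r: "0 < r" "r < 1" using rem_props[OF assms(1-3)] unfolding r_def by blast+
  have Q1: "Q1 \<ge> real n" unfolding Q1_def n using q_ge[OF assms(1-3), of m] by simp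
  have Q0: "Q0 > 0" unfolding Q0_def using q_pos[OF assms(1-3)] by simp
  have npos: "real n \<ge> 1" using assms(5) by simp
  have E: "(\<alpha> - conv \<alpha> n) * (Q1 * (Q1 + Q0 * r)) = r"
    using diff_formula[OF assms(1-3), of m] m unfolding n r_def Q1_def Q0_def by simp
  have D: "Q1 * (Q1 + Q0 * r) \<ge> real n"
  proof -
    have "Q1 + Q0 * r \<ge> 1" using Q1 npos Q0 r by (smt (verit) mult_pos_pos)
    then have "Q1 * (Q1 + Q0 * r) \<ge> Q1 * 1" using Q1 npos by (intro mult_left_mono) auto
    then show ?thesis using Q1 by simp
  qed
  have "\<alpha> - conv \<alpha> n = r / (Q1 * (Q1 + Q0 * r))" using E D npos by (simp add: field_simps)
  also have "\<dots> \<le> 1 / (Q1 * (Q1 + Q0 * r))" using r D npos by (intro divide_right_mono) auto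
  also have "\<dots> \<le> 1 / real n" using D npos by (intro divide_left_mono) auto
  finally show ?thesis .
qed


declare cf_q.simps(3)[simp del] cf_p.simps(3)[simp del]

lemma cmp_lt:
  assumes "(0::int) < b" "0 < d"
  shows "(real_of_int a / real_of_int b < real_of_int c / real_of_int d) \<longleftrightarrow> a * d < c * b"
proof -
  have "(real_of_int a / real_of_int b < real_of_int c / real_of_int d) \<longleftrightarrow> real_of_int a * real_of_int d < real_of_int c * real_of_int b"
    using assms by (simp add: field_simps)
  also have "\<dots> \<longleftrightarrow> a * d < c * b" by (simp flip: of_int_mult)
  finally show ?thesis .
qed

lemma cmp_le:
  assumes "(0::int) < b" "0 < d"
  shows "(real_of_int a / real_of_int b \<le> real_of_int c / real_of_int d) \<longleftrightarrow> a * d \<le> c * b"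
  using cmp_lt[OF assms(2,1), of c a] by linarith

lemma delta_mono:
  fixes \<gamma> a b e :: real
  assumes "0 < \<gamma>" "1 \<le> a" "a \<le> b" "0 < e"
  shows "\<gamma> / b powr e \<le> \<gamma> / a powr e"
proof -
  have "a powr e \<le> b powr e" using assms by (intro powr_mono2) auto[3]
  moreover have "0 < a powr e" using assms by simp
  moreover have "0 < b powr e" using assms by simp
  ultimately show ?thesis using assms(1) by (intro divide_left_mono) (auto intro: mult_pos_pos)
qed

lemma powr_split:
  assumes "(0::real) < q"
  shows "q powr (\<tau> + 1) = q * q powr \<tau>"
  using assms by (simp add: powr_add)

lemma low_step:
  assumes irr: "\<alpha> \<notin> \<rat>" "0 < \<alpha>" "\<alpha> < 1"
    and m: "even m" and g: "0 < \<gamma>" "\<gamma> \<le> 1/2" and t: "1 < \<tau>" and q: "(0::int) < q"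
    and lo: "conv \<alpha> m < of_int p / of_int q"
    and hi: "of_int p / of_int q \<le> conv \<alpha> (m+2)"
    and ca: "conv \<alpha> (m+2) < \<alpha>"
  shows "of_int p / of_int q + \<gamma> / (of_int q) powr (\<tau>+1)
     \<le> conv \<alpha> (m+2) + \<gamma> / of_int (cf_q \<alpha> (m+2)) powr (\<tau>+1)"
proof -
  define P0 where "P0 = cf_p \<alpha> m"
  define P1 where "P1 = cf_p \<alpha> (Suc m)"
  define P2 where "P2 = cf_p \<alpha> (m+2)"
  define Q0 where "Q0 = cf_q \<alpha> m"
  define Q1 where "Q1 = cf_q \<alpha> (Suc m)"
  define Q2 where "Q2 = cf_q \<alpha> (m+2)"
  have Q0p: "0 < Q0" and Q1p: "0 < Q1" and Q2p: "0 < Q2"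
    unfolding Q0_def Q1_def Q2_def using q_pos[OF irr] by auto
  have d0: "P1 * Q0 - P0 * Q1 = 1" using det[of \<alpha> m] m unfolding P0_def P1_def Q0_def Q1_def by simp
  have d1: "P2 * Q1 - P1 * Q2 = -1" using det[of \<alpha> "Suc m"] m unfolding P2_def P1_def Q2_def Q1_def by simp
  have c1: "\<alpha> < conv \<alpha> (Suc m)" using odd_above[OF irr, of "Suc m"] m by simp
  define C where "C = p * Q0 - P0 * q"
  define B where "B = p * Q1 - P1 * q"
  define A where "A = P2 * q - p * Q2"
  have "P0 * q < p * Q0" using lo cmp_lt[OF Q0p q, of P0 p] unfolding conv_def P0_def Q0_def by simp
  then have C1: "C \<ge> 1" unfolding C_def by simp
  have "of_int p / of_int q < conv \<alpha> (Suc m)" using hi ca c1 by linarith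
  then have "p * Q1 < P1 * q" using cmp_lt[OF q Q1p, of p P1] unfolding conv_def P1_def Q1_def by simp
  then have B1: "B \<le> -1" unfolding B_def by simp
  have "p * Q2 \<le> P2 * q" using hi cmp_le[OF q Q2p, of p P2] unfolding conv_def P2_def Q2_def by simp
  then have A0: "A \<ge> 0" unfolding A_def by simp
  have id1: "C * Q1 - B * Q0 = q * (P1 * Q0 - P0 * Q1)" unfolding C_def B_def by (simp add: algebra_simps)
  have id2: "B * Q2 + A * Q1 = q * (P2 * Q1 - P1 * Q2)" unfolding A_def B_def by (simp add: algebra_simps)
  have "1 * Q1 \<le> C * Q1" using C1 Q1p by (intro mult_right_mono) auto
  moreover have "0 \<le> (-B) * Q0" using B1 Q0p mult_nonpos_nonneg[of B Q0] by simp
  ultimately have qQ1: "Q1 \<le> q" using id1 d0 by (simp add: algebra_simps)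
  have id2': "q = (-B) * Q2 - A * Q1" using id2 d1 by (simp add: algebra_simps)
  have gpos: "0 < \<gamma> / (of_int Q2) powr (\<tau>+1)" using g Q2p by simp
  show ?thesis
  proof (cases "Q2 \<le> q")
    case True
    have "\<gamma> / (of_int q) powr (\<tau>+1) \<le> \<gamma> / (of_int Q2) powr (\<tau>+1)"
      using True Q2p g t by (intro delta_mono) auto
    then show ?thesis using hi unfolding Q2_def by linarith
  next
    case False
    have A1: "A \<ge> 1"
    proof (rule ccontr)
      assume "\<not> A \<ge> 1"
      then have "A = 0" using A0 by simp
      then have "q = (-B) * Q2" using id2' by simp
      moreover have "1 * Q2 \<le> (-B) * Q2" using B1 Q2p by (intro mult_right_mono) auto
      ultimately show False using False by simp
    qed
    have "1 * Q2 \<le> (-B) * Q2" using B1 Q2p by (intro mult_right_mono) auto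
    moreover have "A * Q1 \<le> A * q" using qQ1 A0 by (intro mult_left_mono) auto
    moreover have "(1 + A) * q = q + A * q" by (simp add: algebra_simps)
    ultimately have Q2le: "Q2 \<le> (1 + A) * q" using id2' by linarith
    define qr where "qr = (of_int q :: real)"
    define Q2r where "Q2r = (of_int Q2 :: real)"
    define Ar where "Ar = (of_int A :: real)"
    have qr1: "qr \<ge> 1" unfolding qr_def using q by simp
    have Q2rp: "Q2r > 0" unfolding Q2r_def using Q2p by simp
    have Ar1: "Ar \<ge> 1" unfolding Ar_def using A1 by simp
    have Q2le': "Q2r \<le> (1 + Ar) * qr" unfolding Q2r_def Ar_def qr_def using Q2le
      by (metis of_int_add of_int_le_iff of_int_mult of_int_1)
    have qpt: "qr \<le> qr powr \<tau>"
    proof -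
      have "qr powr 1 \<le> qr powr \<tau>" using qr1 t by (intro powr_mono) auto
      then show ?thesis using qr1 by simp
    qed
    have qptp: "0 < qr powr \<tau>" using qr1 by simp
    have diff: "conv \<alpha> (m+2) - of_int p / of_int q = Ar / (qr * Q2r)"
      unfolding conv_def Ar_def A_def qr_def Q2r_def P2_def[symmetric] Q2_def[symmetric]
      using q Q2p by (simp add: field_simps)
    have key: "\<gamma> * Q2r \<le> Ar * qr powr \<tau>"
    proof -
      have "\<gamma> * Q2r \<le> \<gamma> * ((1 + Ar) * qr)" using Q2le' g by (intro mult_left_mono) auto
      also have "\<dots> \<le> (1/2) * ((1 + Ar) * qr)" using g Ar1 qr1 by (intro mult_right_mono) auto
      also have "\<dots> \<le> Ar * qr" using Ar1 qr1 by (simp add: algebra_simps)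
      also have "\<dots> \<le> Ar * qr powr \<tau>" using qpt Ar1 by (intro mult_left_mono) auto
      finally show ?thesis .
    qed
    have "\<gamma> / qr powr (\<tau>+1) = (\<gamma> * Q2r) / (qr * qr powr \<tau> * Q2r)"
      using powr_split[of qr \<tau>] qr1 Q2rp by (simp add: field_simps)
    also have "\<dots> \<le> (Ar * qr powr \<tau>) / (qr * qr powr \<tau> * Q2r)"
      using key qr1 Q2rp qptp by (intro divide_right_mono) auto
    also have "\<dots> = Ar / (qr * Q2r)" using qr1 qptp by (simp add: field_simps)
    finally have "\<gamma> / qr powr (\<tau>+1) \<le> Ar / (qr * Q2r)" .
    then show ?thesis using diff gpos unfolding qr_def Q2r_def Q2_def by linarith
  qed
qed

lemma up_step:
  assumes irr: "\<alpha> \<notin> \<rat>" "0 < \<alpha>" "\<alpha> < 1"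
    and m: "even m" and g: "0 < \<gamma>" and t: "1 < \<tau>" and q: "(0::int) < q"
    and lo: "conv \<alpha> m \<le> of_int p / of_int q"
    and hi: "of_int p / of_int q < \<alpha>"
  shows "conv \<alpha> m - \<gamma> / of_int (cf_q \<alpha> m) powr (\<tau>+1)
     \<le> of_int p / of_int q - \<gamma> / (of_int q) powr (\<tau>+1)"
proof -
  define P0 where "P0 = cf_p \<alpha> m"
  define P1 where "P1 = cf_p \<alpha> (Suc m)"
  define Q0 where "Q0 = cf_q \<alpha> m"
  define Q1 where "Q1 = cf_q \<alpha> (Suc m)"
  have Q0p: "0 < Q0" and Q1p: "0 < Q1"
    unfolding Q0_def Q1_def using q_pos[OF irr] by auto
  have d0: "P1 * Q0 - P0 * Q1 = 1" using det[of \<alpha> m] m unfolding P0_def P1_def Q0_def Q1_def by simp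
  have c1: "\<alpha> < conv \<alpha> (Suc m)" using odd_above[OF irr, of "Suc m"] m by simp
  define C where "C = p * Q0 - P0 * q"
  define B where "B = p * Q1 - P1 * q"
  have "P0 * q \<le> p * Q0" using lo cmp_le[OF Q0p q, of P0 p] unfolding conv_def P0_def Q0_def by simp
  then have C0: "C \<ge> 0" unfolding C_def by simp
  have "of_int p / of_int q < conv \<alpha> (Suc m)" using hi c1 by linarith
  then have "p * Q1 < P1 * q" using cmp_lt[OF q Q1p, of p P1] unfolding conv_def P1_def Q1_def by simp
  then have B1: "B \<le> -1" unfolding B_def by simp
  have id1: "C * Q1 - B * Q0 = q * (P1 * Q0 - P0 * Q1)" unfolding C_def B_def by (simp add: algebra_simps)
  have "0 \<le> C * Q1" using C0 Q1p by simp
  moreover have "1 * Q0 \<le> (-B) * Q0" using B1 Q0p by (intro mult_right_mono) auto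
  ultimately have "Q0 \<le> q" using id1 d0 by (simp add: algebra_simps)
  then have "\<gamma> / (of_int q) powr (\<tau>+1) \<le> \<gamma> / (of_int Q0) powr (\<tau>+1)"
    using Q0p g t by (intro delta_mono) auto
  then show ?thesis using lo unfolding Q0_def by linarith
qed


lemma low_all:
  assumes irr: "\<alpha> \<notin> \<rat>" "0 < \<alpha>" "\<alpha> < 1"
    and g: "0 < \<gamma>" "\<gamma> \<le> 1/2" and t: "1 < \<tau>" and q: "(0::int) < q"
    and bel: "\<forall>n. even n \<longrightarrow> conv \<alpha> n < \<alpha>"
  shows "of_int p / of_int q \<le> conv \<alpha> (2*j) \<Longrightarrow> \<exists>k. even k \<and> k \<le> 2*j \<and>
     of_int p / of_int q + \<gamma> / (of_int q) powr (\<tau>+1) \<le> conv \<alpha> k + \<gamma> / of_int (cf_q \<alpha> k) powr (\<tau>+1)"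
proof (induction j)
  case 0
  have "\<gamma> / (of_int q) powr (\<tau>+1) \<le> \<gamma> / 1 powr (\<tau>+1)"
    using g t q by (intro delta_mono) auto
  then have "of_int p / of_int q + \<gamma> / (of_int q) powr (\<tau>+1) \<le> conv \<alpha> 0 + \<gamma> / of_int (cf_q \<alpha> 0) powr (\<tau>+1)"
    using 0 by (simp add: conv_def)
  then show ?case by (intro exI[of _ 0]) simp
next
  case (Suc j)
  show ?case
  proof (cases "of_int p / of_int q \<le> conv \<alpha> (2*j)")
    case True
    then obtain k where "even k" "k \<le> 2*j" "of_int p / of_int q + \<gamma> / (of_int q) powr (\<tau>+1) \<le> conv \<alpha> k + \<gamma> / of_int (cf_q \<alpha> k) powr (\<tau>+1)"
      using Suc.IH by blast
    then show ?thesis by (intro exI[of _ k]) auto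
  next
    case False
    have e: "2 * Suc j = 2*j + 2" by simp
    have "of_int p / of_int q + \<gamma> / (of_int q) powr (\<tau>+1) \<le> conv \<alpha> (2*j+2) + \<gamma> / of_int (cf_q \<alpha> (2*j+2)) powr (\<tau>+1)"
      using low_step[OF irr _ g t q, of "2*j" p] False Suc.prems bel unfolding e by auto
    then show ?thesis unfolding e by (intro exI[of _ "2*j+2"]) auto
  qed
qed


theorem lemma1:
  fixes \<gamma> \<tau> \<alpha> :: real and N :: nat
  assumes "\<gamma> > 0" and "\<tau> > 1" and "\<alpha> \<in> Dioph \<gamma> \<tau>"
    and gap: "\<forall>n. even n \<and> n > N \<longrightarrow>
       conv \<alpha> n + \<gamma> / real_of_int (cf_q \<alpha> n) powr (\<tau> + 1)
         < conv \<alpha> (n + 2) - \<gamma> / real_of_int (cf_q \<alpha> (n + 2)) powr (\<tau> + 1)"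
    and below: "\<forall>n. even n \<longrightarrow>
       \<alpha> - conv \<alpha> n > \<gamma> / real_of_int (cf_q \<alpha> n) powr (\<tau> + 1)"
  shows "\<exists>N1::nat. \<forall>n. even n \<and> n > N1 \<longrightarrow>
     (\<forall>(p::int) (q::nat). q \<ge> 1 \<longrightarrow>
        real_of_int p / real q \<notin> {conv \<alpha> n <..< conv \<alpha> (n + 2)} \<longrightarrow>
          (real_of_int p / real q + \<gamma> / real q powr (\<tau> + 1) \<notin>
             {conv \<alpha> n + \<gamma> / real_of_int (cf_q \<alpha> n) powr (\<tau> + 1) <..<
              conv \<alpha> (n + 2) - \<gamma> / real_of_int (cf_q \<alpha> (n + 2)) powr (\<tau> + 1)}
         \<and> real_of_int p / real q - \<gamma> / real q powr (\<tau> + 1) \<notin>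
             {conv \<alpha> n + \<gamma> / real_of_int (cf_q \<alpha> n) powr (\<tau> + 1) <..<
              conv \<alpha> (n + 2) - \<gamma> / real_of_int (cf_q \<alpha> (n + 2)) powr (\<tau> + 1)}))"
proof -
  note g = assms(1) and t = assms(2)
  have a01: "0 < \<alpha>" "\<alpha> < 1" and dio: "\<And>q::nat. q \<ge> 1 \<Longrightarrow> dist_int (real q * \<alpha>) \<ge> \<gamma> / real q powr \<tau>"
    using assms(3) unfolding Dioph_def by auto
  have g2: "\<gamma> \<le> 1/2"
  proof -
    have "\<gamma> \<le> dist_int \<alpha>" using dio[of 1] by simp
    moreover have "dist_int \<alpha> \<le> 1/2" unfolding dist_int_def using of_int_round_abs_le[of \<alpha>] by linarith
    ultimately show ?thesis by linarith
  qed
  have dio2: "\<bar>\<alpha> - real_of_int p / real q\<bar> \<ge> \<gamma> / real q powr (\<tau> + 1)" if q: "q \<ge> 1" for p :: int and q :: nat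
  proof -
    have qp: "real q > 0" using q by simp
    have "\<gamma> / real q powr \<tau> \<le> \<bar>real q * \<alpha> - of_int (round (real q * \<alpha>))\<bar>"
      using dio[OF q] unfolding dist_int_def .
    also have "\<dots> \<le> \<bar>real q * \<alpha> - of_int p\<bar>" by (rule round_diff_minimal)
    also have "\<dots> = real q * \<bar>\<alpha> - real_of_int p / real q\<bar>"
      using qp by (simp add: field_simps abs_mult[symmetric] del: abs_mult)
    finally have "\<gamma> / real q powr \<tau> / real q \<le> \<bar>\<alpha> - real_of_int p / real q\<bar>"
      using qp by (simp add: field_simps)
    moreover have "\<gamma> / real q powr \<tau> / real q = \<gamma> / real q powr (\<tau> + 1)"
      using powr_split[OF qp, of \<tau>] by (simp add: field_simps)
    ultimately show ?thesis by linarith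
  qed
  have irr: "\<alpha> \<notin> \<rat>"
  proof
    assume "\<alpha> \<in> \<rat>"
    then obtain a :: int and b :: nat where b: "b > 0" and ab: "\<alpha> = of_int a / of_nat b"
      by (metis Rats_cases' of_int_of_nat_eq zero_less_imp_eq_int)
    have "\<gamma> / real b powr (\<tau> + 1) > 0" using g b by simp
    moreover have "\<bar>\<alpha> - real_of_int a / real b\<bar> = 0" using ab by simp
    ultimately show False using dio2[of b a] b by simp
  qed
  note irr3 = irr a01
  define L where "L k = conv \<alpha> k + \<gamma> / real_of_int (cf_q \<alpha> k) powr (\<tau> + 1)" for k
  define U where "U k = conv \<alpha> (k + 2) - \<gamma> / real_of_int (cf_q \<alpha> (k + 2)) powr (\<tau> + 1)" for k
  have dpos: "\<gamma> / real_of_int (cf_q \<alpha> k) powr (\<tau> + 1) > 0" for k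
    using q_pos[OF irr3, of k] g by simp
  have bel: "\<forall>n. even n \<longrightarrow> conv \<alpha> n < \<alpha>" using below dpos
    by (metis diff_gt_0_iff_gt order.strict_trans)
  have Lalpha: "L k < \<alpha>" if "even k" for k using below that unfolding L_def by auto
  have Lstep: "L k < L (k + 2)" if "even k" "k > N" for k
    using gap that dpos[of "k+2"] unfolding L_def by force
  have Lmono: "L k \<le> L (k + 2 * d)" if "even k" "k > N" for k d
  proof (induction d)
    case 0 then show ?case by simp
  next
    case (Suc d)
    have "L (k + 2 * d) < L (k + 2 * d + 2)" using Lstep[of "k + 2*d"] that by simp
    then show ?case using Suc by simp
  qed
  define S where "S = L ` {k. k \<le> N \<and> even k}"
  have Sfin: "finite S" and Sne: "S \<noteq> {}" unfolding S_def by auto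
  define K where "K = Max S"
  have KS: "K \<in> S" unfolding K_def using Sfin Sne by simp
  have Kalpha: "K < \<alpha>" using KS Lalpha unfolding S_def by auto
  have LK: "L k \<le> K" if "k \<le> N" "even k" for k
    unfolding K_def using Sfin that unfolding S_def by auto
  obtain n0 :: nat where n0: "1 / (\<alpha> - K) < real n0" using reals_Archimedean2 by blast
  have n0p: "n0 > 0" using n0 Kalpha by (cases "n0 = 0") auto
  have Lbig: "K < L n" if "even n" "n \<ge> n0" for n
  proof -
    have n1: "n \<ge> 1" using that n0p by simp
    have "\<alpha> - conv \<alpha> n \<le> 1 / real n" using even_close[OF irr3 that(1) n1] .
    also have "\<dots> \<le> 1 / real n0" using n0p that by (simp add: frac_le)
    also have "\<dots> < \<alpha> - K"
    proof -
      have "1 < real n0 * (\<alpha> - K)" using n0 Kalpha by (simp add: field_simps)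
      then show ?thesis using n0p Kalpha by (simp add: field_simps)
    qed
    finally have "K < conv \<alpha> n" by simp
    then show ?thesis unfolding L_def using dpos[of n] by simp
  qed
  have Lfinal: "L k \<le> L n" if "even k" "k \<le> n" "even n" "n > max N n0" for k n
  proof (cases "k \<le> N")
    case True
    then show ?thesis using LK[OF True that(1)] Lbig[of n] that by force
  next
    case False
    have ev: "even (n - k)" using that by simp
    then obtain d where "n - k = 2 * d" by blast
    then have "n = k + 2 * d" using that(2) by simp
    then show ?thesis using Lmono[of k d] False that(1) by simp
  qed
  show ?thesis
  proof (intro exI[of _ "max N n0"] allI impI conjI)
    fix n :: nat and p :: int and q :: nat
    assume nn: "even n \<and> max N n0 < n" and q1: "1 \<le> q"
      and xI: "real_of_int p / real q \<notin> {conv \<alpha> n<..<conv \<alpha> (n + 2)}"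
    define x where "x = real_of_int p / real q"
    define dq where "dq = \<gamma> / real q powr (\<tau> + 1)"
    have dqp: "dq > 0" unfolding dq_def using q1 g by simp
    have qi: "(0::int) < int q" using q1 by simp
    have xi: "real_of_int p / real_of_int (int q) = x" unfolding x_def by simp
    have dqi: "\<gamma> / real_of_int (int q) powr (\<tau> + 1) = dq" unfolding dq_def by simp
    have LU: "L n < U n" using gap nn unfolding L_def U_def by auto
    have cases: "x \<le> conv \<alpha> n \<or> conv \<alpha> (n+2) \<le> x" using xI unfolding x_def by auto
    have "x + dq \<notin> {L n<..<U n} \<and> x - dq \<notin> {L n<..<U n}"
    proof (cases "x \<le> conv \<alpha> n")
      case True
      have ne: "n = 2 * (n div 2)" using nn by simp
      obtain k where k: "even k" "k \<le> n" "x + dq \<le> L k"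
        using low_all[OF irr3 g g2 t qi bel, of p "n div 2"] True unfolding xi dqi ne[symmetric] L_def
        by blast
      have "L k \<le> L n" using Lfinal[of k n] k nn by simp
      moreover have "x - dq < L n" using True dqp dpos[of n] unfolding L_def by simp
      ultimately show ?thesis using k by auto
    next
      case False
      then have hi: "conv \<alpha> (n+2) \<le> x" using cases by simp
      have U2: "U n < conv \<alpha> (n+2)" unfolding U_def using dpos[of "n+2"] by simp
      have A: "x + dq \<notin> {L n<..<U n}" using hi U2 dqp by auto
      have "U n \<le> x - dq"
      proof (cases "x < \<alpha>")
        case True
        have "even (n+2)" using nn by simp
        from up_step[OF irr3 this g t qi, of p] hi True
        show ?thesis unfolding xi dqi U_def by simp
      next
        case False
        have "x \<noteq> \<alpha>"
        proof
          assume "x = \<alpha>"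
          then show False using dio2[OF q1, of p] dqp unfolding x_def dq_def by simp
        qed
        then have "x - \<alpha> \<ge> dq" using dio2[OF q1, of p] False unfolding x_def dq_def by simp
        moreover have "conv \<alpha> (n+2) < \<alpha>" using bel nn by simp
        ultimately show ?thesis using U2 by simp
      qed
      then show ?thesis using A by auto
    qed
    then show "real_of_int p / real q + \<gamma> / real q powr (\<tau> + 1) \<notin>
             {conv \<alpha> n + \<gamma> / real_of_int (cf_q \<alpha> n) powr (\<tau> + 1) <..<
              conv \<alpha> (n + 2) - \<gamma> / real_of_int (cf_q \<alpha> (n + 2)) powr (\<tau> + 1)}"
      and "real_of_int p / real q - \<gamma> / real q powr (\<tau> + 1) \<notin>
             {conv \<alpha> n + \<gamma> / real_of_int (cf_q \<alpha> n) powr (\<tau> + 1) <..<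
              conv \<alpha> (n + 2) - \<gamma> / real_of_int (cf_q \<alpha> (n + 2)) powr (\<tau> + 1)}"
      unfolding x_def dq_def L_def U_def by auto
  qed
qed

end
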